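(* Let $f_\lambda$ be a probability density on $(0,\infty)$ with finite mean $\mu_\lambda$. Let $P_p$ be a probability distribution on $\{1,\dots,N\}$ with mean $E_p[n]=\sum_n n\,P_p(n)$, and for each $n$ let $g(\cdot\mid n)$ be a probability distribution on $\{0,1,\dots,N\}$ with mean $\overline{g}(n)=\sum_m m\,g(m\mid n)$. Consider random variables $(N_p,N_a,X,T)$ such that: $P\{N_p=n\}=\frac{n}{E_p[n]}P_p(n)$; conditionally on $N_p=n$, $N_a$ has distribution $g(\cdot\mid n)$; conditionally on $N_a=m$, $X$ is distributed as $\lambda_1+\dots+\lambda_m$ with $\lambda_1,\dots,\lambda_m$ i.i.d. with density $f_\lambda$ ($X=0$ if $m=0$); conditionally on $X=x$, $T$ is exponentially distributed with rate $x$ ($T=+\infty$ if $x=0$). Then, with the convention $1/0=+\infty$, $$E[T]\ \ge\ \frac{1}{\mu_\lambda\, E_p[n]}\; E_p\!\left[\frac{n}{\overline{g}(n)}\right],$$ where $E_p[h(n)]=\sum_n h(n)P_p(n)$.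
   Context: This models the content access delay $T$ of a random content request in an opportunistic network: $P_p(n)$ is the fraction of contents requested by exactly $n$ nodes (content popularity distribution), $g(m\mid n)$ is the probability that a content of popularity $n$ is held by $m$ nodes (availability given popularity), $f_\lambda$ is the distribution of pairwise contact rates (inter-contact times are exponential), and $X$ is the sum of the contact rates between the requester and the $N_a$ holders. *)

theory Defs
  imports "HOL-Probability.Probability"
begin

definition rate_measure :: "(real \<Rightarrow> real) \<Rightarrow> real measure" where
  "rate_measure f = density lborel (\<lambda>x. ennreal (f x))"

definition X_law :: "(real \<Rightarrow> real) \<Rightarrow> nat \<Rightarrow> real measure" where
  "X_law f m = distr (PiM {..<m} (\<lambda>_. rate_measure f)) borel (\<lambda>\<omega>. \<Sum>i<m. \<omega> i)"

definition T_law :: "real \<Rightarrow> ennreal measure" where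
  "T_law x = (if x > 0
     then distr (density lborel (exponential_density x)) borel (\<lambda>t. ennreal t)
     else return borel \<top>)"

definition Np_law :: "nat \<Rightarrow> (nat \<Rightarrow> real) \<Rightarrow> nat measure" where
  "Np_law N Pp = point_measure {1..N}
     (\<lambda>n. ennreal (real n * Pp n / (\<Sum>k\<in>{1..N}. real k * Pp k)))"

definition Na_law :: "nat \<Rightarrow> (nat \<Rightarrow> nat \<Rightarrow> real) \<Rightarrow> nat \<Rightarrow> nat measure" where
  "Na_law N g n = point_measure {0..N} (\<lambda>m. ennreal (g m n))"

definition delay_law :: "nat \<Rightarrow> (nat \<Rightarrow> real) \<Rightarrow> (nat \<Rightarrow> nat \<Rightarrow> real) \<Rightarrow> (real \<Rightarrow> real)
    \<Rightarrow> ennreal measure" where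
  "delay_law N Pp g f =
     Np_law N Pp \<bind> (\<lambda>n. Na_law N g n \<bind> (\<lambda>m. X_law f m \<bind> T_law))"

definition expected_delay :: "nat \<Rightarrow> (nat \<Rightarrow> real) \<Rightarrow> (nat \<Rightarrow> nat \<Rightarrow> real) \<Rightarrow> (real \<Rightarrow> real)
    \<Rightarrow> ennreal" where
  "expected_delay N Pp g f = (\<integral>\<^sup>+ t. t \<partial>delay_law N Pp g f)"

end

theory Submission
  imports Defs
begin


lemma T_int_pos:
  assumes "x > 0"
  shows "(\<integral>\<^sup>+ t. t \<partial>T_law x) = ennreal (1/x)"
proof -
  have "(\<integral>\<^sup>+ t. t \<partial>T_law x) = (\<integral>\<^sup>+ s. ennreal s \<partial>density lborel (exponential_density x))"
    using assms by (simp add: T_law_def nn_integral_distr)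
  also have "\<dots> = (\<integral>\<^sup>+ s. ennreal (exponential_density x s) * ennreal s \<partial>lborel)"
    by (subst nn_integral_density) auto
  also have "\<dots> = (\<integral>\<^sup>+ s. ennreal (erlang_density 0 x s * s ^ 1) \<partial>lborel)"
    by (intro nn_integral_cong) (auto simp: exponential_density_def ennreal_mult'' ennreal_neg)
  also have "\<dots> = ennreal (1/x)"
    using nn_integral_erlang_ith_moment[of x 0 1] assms by simp
  finally show ?thesis .
qed

lemma T_int_nonpos:
  assumes "\<not> x > 0"
  shows "(\<integral>\<^sup>+ t. t \<partial>T_law x) = \<top>"
  using assms by (simp add: T_law_def nn_integral_return)

lemma T_law_meas: "T_law \<in> measurable borel (subprob_algebra (borel :: ennreal measure))"
proof (rule measurable_subprob_algebra)
  fix a :: real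
  show "subprob_space (T_law a)"
    by (auto simp: T_law_def intro!: prob_space_imp_subprob_space prob_space_return
        prob_space.prob_space_distr prob_space_exponential_density)
  show "sets (T_law a) = sets borel" by (simp add: T_law_def)
next
  fix A :: "ennreal set" assume A: "A \<in> sets borel"
  have eq: "(\<lambda>a. emeasure (T_law a) A) = (\<lambda>a. if a > 0 then
     (\<integral>\<^sup>+ t. ennreal (exponential_density a t) * indicator A (ennreal t) \<partial>lborel) else indicator A \<top>)"
  proof
    fix a :: real show "emeasure (T_law a) A = (if a > 0 then
     (\<integral>\<^sup>+ t. ennreal (exponential_density a t) * indicator A (ennreal t) \<partial>lborel) else indicator A \<top>)"
    proof (cases "a > 0")
      case True
      have "emeasure (T_law a) A = emeasure (density lborel (exponential_density a)) ((\<lambda>t. ennreal t) -` A)"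
        using True A by (simp add: T_law_def emeasure_distr)
      also have "\<dots> = (\<integral>\<^sup>+ t. ennreal (exponential_density a t) * indicator ((\<lambda>t. ennreal t) -` A) t \<partial>lborel)"
        using A measurable_sets[of ennreal borel borel A] by (subst emeasure_density) auto
      finally show ?thesis using True by (simp add: indicator_def)
    qed (use A in \<open>simp add: T_law_def\<close>)
  qed
  show "(\<lambda>a. emeasure (T_law a) A) \<in> borel_measurable borel"
    unfolding eq using A
    by (intro measurable_If lborel.borel_measurable_nn_integral) (auto simp: exponential_density_def split_beta')
qed



lemma ennreal_sum_le: "finite I \<Longrightarrow> ennreal (\<Sum>i\<in>I. a i) \<le> (\<Sum>i\<in>I. ennreal (a i))"
proof (induction I rule: finite_induct)
  case (insert x F)
  have aux: "ennreal (u + v) \<le> ennreal u + ennreal v" for u v :: real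
  proof (cases "u \<ge> 0 \<and> v \<ge> 0")
    case True then show ?thesis by (simp add: ennreal_plus)
  next
    case False
    then show ?thesis
    proof (cases "u < 0")
      case True
      then have "ennreal (u + v) \<le> ennreal v" by (intro ennreal_leI) simp
      then show ?thesis by (simp add: add_increasing)
    next
      case False2: False
      with False have "v < 0" by auto
      then have "ennreal (u + v) \<le> ennreal u" by (intro ennreal_leI) simp
      then show ?thesis by (simp add: add_increasing2)
    qed
  qed
  have "ennreal (\<Sum>i\<in>insert x F. a i) = ennreal (a x + (\<Sum>i\<in>F. a i))" using insert by simp
  also have "\<dots> \<le> ennreal (a x) + ennreal (\<Sum>i\<in>F. a i)" by (rule aux)
  also have "\<dots> \<le> ennreal (a x) + (\<Sum>i\<in>F. ennreal (a i))" using insert by (intro add_left_mono) auto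
  finally show ?case using insert by simp
qed simp

context
  fixes f :: "real \<Rightarrow> real"
  assumes f_meas[measurable]: "f \<in> borel_measurable borel"
    and f_nonneg: "\<And>x. f x \<ge> 0"
    and f_supp: "\<And>x. x \<le> 0 \<Longrightarrow> f x = 0"
    and f_int: "integrable lborel f"
    and f_prob: "(\<integral>x. f x \<partial>lborel) = 1"
    and f_mean: "integrable lborel (\<lambda>x. x * f x)"
begin

lemma rate_prob: "prob_space (rate_measure f)"
proof (rule prob_spaceI)
  have "emeasure (rate_measure f) (space (rate_measure f)) = (\<integral>\<^sup>+ x. ennreal (f x) \<partial>lborel)"
    by (simp add: rate_measure_def emeasure_density)
  also have "\<dots> = ennreal (\<integral>x. f x \<partial>lborel)"
    by (rule nn_integral_eq_integral[OF f_int]) (simp add: f_nonneg)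
  finally show "emeasure (rate_measure f) (space (rate_measure f)) = 1" by (simp add: f_prob)
qed

lemma rate_mean: "(\<integral>\<^sup>+ x. ennreal x \<partial>rate_measure f) = ennreal (\<integral>x. x * f x \<partial>lborel)"
proof -
  have "(\<integral>\<^sup>+ x. ennreal x \<partial>rate_measure f) = (\<integral>\<^sup>+ x. ennreal (f x) * ennreal x \<partial>lborel)"
    by (simp add: rate_measure_def nn_integral_density)
  also have "\<dots> = (\<integral>\<^sup>+ x. ennreal (x * f x) \<partial>lborel)"
    by (intro nn_integral_cong) (metis ennreal_mult'' ennreal_neg f_nonneg f_supp linorder_not_le
        mult.commute mult_zero_left order_less_imp_le)
  also have "\<dots> = ennreal (\<integral>x. x * f x \<partial>lborel)"
    by (rule nn_integral_eq_integral[OF f_mean])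
       (auto intro!: AE_I2 simp: f_nonneg, metis f_supp f_nonneg linorder_not_le mult_nonneg_nonneg order_less_imp_le order_refl mult_zero_right)
  finally show ?thesis .
qed


lemma sets_X[measurable_cong]: "sets (X_law f m) = sets borel"
  by (simp add: X_law_def)

lemma sum_meas[measurable]: "(\<lambda>\<omega>. \<Sum>i<m. \<omega> i) \<in> borel_measurable (PiM {..<m} (\<lambda>_. rate_measure f))"
proof -
  have sr: "sets (rate_measure f) = sets borel" by (simp add: rate_measure_def)
  have "(\<lambda>\<omega>. \<omega> i) \<in> borel_measurable (PiM {..<m} (\<lambda>_. rate_measure f))" if "i < m" for i
    using measurable_component_singleton[of i "{..<m}" "\<lambda>_. rate_measure f"] that
    by (simp add: measurable_cong_sets[OF refl sr])
  then show ?thesis using borel_measurable_sum[of "{..<m}" "\<lambda>i \<omega>. \<omega> i"] by simp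
qed

lemma X_prob: "prob_space (X_law f m)"
  unfolding X_law_def
  by (intro prob_space.prob_space_distr prob_space_PiM rate_prob) (auto simp: sum_meas)

lemma X_mean: "(\<integral>\<^sup>+ x. ennreal x \<partial>X_law f m) \<le> ennreal (real m * (\<integral>x. x * f x \<partial>lborel))"
proof -
  let ?P = "PiM {..<m} (\<lambda>_. rate_measure f)"
  have sr[measurable_cong]: "sets (rate_measure f) = sets borel" by (simp add: rate_measure_def)
  have "(\<integral>\<^sup>+ x. ennreal x \<partial>X_law f m) = (\<integral>\<^sup>+ \<omega>. ennreal (\<Sum>i<m. \<omega> i) \<partial>?P)"
    unfolding X_law_def by (subst nn_integral_distr) (auto simp: sum_meas)
  also have "\<dots> \<le> (\<integral>\<^sup>+ \<omega>. (\<Sum>i<m. ennreal (\<omega> i)) \<partial>?P)"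
    by (intro nn_integral_mono ennreal_sum_le) auto
  also have "\<dots> = (\<Sum>i<m. \<integral>\<^sup>+ \<omega>. ennreal (\<omega> i) \<partial>?P)"
    by (rule nn_integral_sum) auto
  also have "\<dots> = (\<Sum>i<m. \<integral>\<^sup>+ x. ennreal x \<partial>rate_measure f)"
  proof (intro sum.cong refl)
    fix i assume i: "i \<in> {..<m}"
    have "(\<integral>\<^sup>+ x. ennreal x \<partial>rate_measure f) = (\<integral>\<^sup>+ x. ennreal x \<partial>distr ?P (rate_measure f) (\<lambda>\<omega>. \<omega> i))"
      using distr_PiM_component[of "{..<m}" "\<lambda>_. rate_measure f" i] i rate_prob by simp
    also have "\<dots> = (\<integral>\<^sup>+ \<omega>. ennreal (\<omega> i) \<partial>?P)"
      using i by (subst nn_integral_distr) auto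
    finally show "(\<integral>\<^sup>+ \<omega>. ennreal (\<omega> i) \<partial>?P) = (\<integral>\<^sup>+ x. ennreal x \<partial>rate_measure f)" by simp
  qed
  also have "\<dots> = ennreal (real m * (\<integral>x. x * f x \<partial>lborel))"
    by (simp add: rate_mean ennreal_of_nat_eq_real_of_nat ennreal_mult')
  finally show ?thesis .
qed

lemma X0_int: assumes [measurable]: "h \<in> borel_measurable borel"
  shows "(\<integral>\<^sup>+ x. h x \<partial>X_law f 0) = h 0"
proof -
  have pp: "prob_space (PiM ({}::nat set) (\<lambda>_. rate_measure f))" by (rule prob_space_PiM) auto
  have "(\<integral>\<^sup>+ x. h x \<partial>X_law f 0) = (\<integral>\<^sup>+ \<omega>. h 0 \<partial>PiM ({}::nat set) (\<lambda>_. rate_measure f))"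
    unfolding X_law_def by (subst nn_integral_distr) auto
  also have "\<dots> = h 0"
    by (simp add: prob_space.emeasure_space_1[OF pp])
  finally show ?thesis .
qed

end


lemma h_meas[measurable]: "(\<lambda>x. \<integral>\<^sup>+ t. t \<partial>T_law x) \<in> borel_measurable borel"
  using measurable_compose[OF T_law_meas nn_integral_measurable_subprob_algebra[of "\<lambda>t. t" borel]]
  by simp

lemma tangent:
  assumes a: "a > 0"
  shows "ennreal (2/a) \<le> (\<integral>\<^sup>+ t. t \<partial>T_law x) + ennreal (x/a^2)"
proof (cases "x > 0")
  case True
  have "2/a \<le> 1/x + x/a^2"
  proof -
    have "(1/x + x/a^2) - 2/a = (a - x)^2 / (x * a^2)"
      using True a by (simp add: field_simps power2_eq_square)
    also have "\<dots> \<ge> 0" using True a by simp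
    finally show ?thesis by simp
  qed
  then have "ennreal (2/a) \<le> ennreal (1/x + x/a^2)" by (rule ennreal_leI)
  also have "\<dots> = ennreal (1/x) + ennreal (x/a^2)" using True by (simp add: ennreal_plus)
  finally show ?thesis using T_int_pos[OF True] by simp
qed (simp add: T_int_nonpos)

lemma meas_pow:
  assumes "sets M = Pow (space M)" "\<And>x. x \<in> space M \<Longrightarrow> K x \<in> space N"
  shows "K \<in> measurable M N"
  using assms unfolding measurable_def by auto

context
  fixes f :: "real \<Rightarrow> real"
  assumes f_meas[measurable]: "f \<in> borel_measurable borel"
    and f_nonneg: "\<And>x. f x \<ge> 0"
    and f_supp: "\<And>x. x \<le> 0 \<Longrightarrow> f x = 0"
    and f_int: "integrable lborel f"
    and f_prob: "(\<integral>x. f x \<partial>lborel) = 1"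
    and f_mean: "integrable lborel (\<lambda>x. x * f x)"
begin

lemmas fa = f_meas f_nonneg f_supp f_int f_prob f_mean

lemma T_meas_X: "T_law \<in> measurable (X_law f m) (subprob_algebra borel)"
  using T_law_meas by (simp add: measurable_cong_sets[OF sets_X[OF fa] refl])

lemma J_eq: "(\<integral>\<^sup>+ t. t \<partial>(X_law f m \<bind> T_law)) = (\<integral>\<^sup>+ x. (\<integral>\<^sup>+ t. t \<partial>T_law x) \<partial>X_law f m)"
  by (rule nn_integral_bind[OF _ T_meas_X]) simp

lemma K2_space: "X_law f m \<bind> T_law \<in> space (subprob_algebra borel)"
proof -
  have "subprob_space (X_law f m \<bind> T_law)"
    by (rule subprob_space_bind[OF _ T_meas_X]) (rule prob_space_imp_subprob_space[OF X_prob[OF fa]])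
  moreover have "sets (X_law f m \<bind> T_law) = sets borel"
    by (rule sets_bind) (auto simp: T_law_def prob_space.not_empty[OF X_prob[OF fa]])
  ultimately show ?thesis by (simp add: space_subprob_algebra)
qed

lemma J0: "(\<integral>\<^sup>+ t. t \<partial>(X_law f 0 \<bind> T_law)) = \<top>"
  by (simp add: J_eq X0_int[OF fa] T_int_nonpos)

lemma J_tangent:
  assumes a: "a > 0"
  shows "ennreal (2/a) \<le> (\<integral>\<^sup>+ t. t \<partial>(X_law f m \<bind> T_law)) + ennreal (real m * (\<integral>x. x * f x \<partial>lborel) / a^2)"
proof -
  interpret X: prob_space "X_law f m" by (rule X_prob[OF fa])
  have "ennreal (2/a) = (\<integral>\<^sup>+ x. ennreal (2/a) \<partial>X_law f m)"
    by (simp add: X.emeasure_space_1)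
  also have "\<dots> \<le> (\<integral>\<^sup>+ x. (\<integral>\<^sup>+ t. t \<partial>T_law x) + ennreal (x/a^2) \<partial>X_law f m)"
    by (intro nn_integral_mono tangent a)
  also have "\<dots> = (\<integral>\<^sup>+ x. (\<integral>\<^sup>+ t. t \<partial>T_law x) \<partial>X_law f m) + (\<integral>\<^sup>+ x. ennreal (1/a^2) * ennreal x \<partial>X_law f m)"
  proof -
    have "(\<integral>\<^sup>+ x. (\<integral>\<^sup>+ t. t \<partial>T_law x) + ennreal (x/a^2) \<partial>X_law f m)
      = (\<integral>\<^sup>+ x. (\<integral>\<^sup>+ t. t \<partial>T_law x) + ennreal (1/a^2) * ennreal x \<partial>X_law f m)"
      by (intro nn_integral_cong) (simp add: ennreal_mult'[symmetric])
    also have "\<dots> = (\<integral>\<^sup>+ x. (\<integral>\<^sup>+ t. t \<partial>T_law x) \<partial>X_law f m) + (\<integral>\<^sup>+ x. ennreal (1/a^2) * ennreal x \<partial>X_law f m)"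
      by (rule nn_integral_add) (auto simp: measurable_cong_sets[OF sets_X[OF fa] refl])
    finally show ?thesis .
  qed
  also have "(\<integral>\<^sup>+ x. ennreal (1/a^2) * ennreal x \<partial>X_law f m) = ennreal (1/a^2) * (\<integral>\<^sup>+ x. ennreal x \<partial>X_law f m)"
    by (rule nn_integral_cmult) (auto simp: measurable_cong_sets[OF sets_X[OF fa] refl])
  also have "\<dots> \<le> ennreal (1/a^2) * ennreal (real m * (\<integral>x. x * f x \<partial>lborel))"
    by (intro mult_left_mono X_mean[OF fa]) auto
  also have "\<dots> = ennreal (real m * (\<integral>x. x * f x \<partial>lborel) / a^2)"
    by (subst ennreal_mult'[symmetric]) auto
  finally show ?thesis by (simp add: J_eq add_left_mono)
qed

lemma mu_pos: "(\<integral>x. x * f x \<partial>lborel) > 0"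
proof -
  have nn: "\<And>x. 0 \<le> x * f x"
    by (metis f_supp f_nonneg linorder_not_le mult_nonneg_nonneg order_less_imp_le order_refl mult_zero_right mult_zero_left)
  have ge: "(\<integral>x. x * f x \<partial>lborel) \<ge> 0" by (simp add: nn)
  show ?thesis
  proof (rule ccontr)
    assume "\<not> ?thesis"
    then have "(\<integral>x. x * f x \<partial>lborel) = 0" using ge by simp
    then have "AE x in lborel. x * f x = 0"
      using integral_nonneg_eq_0_iff_AE[OF f_mean] nn by simp
    then have "AE x in lborel. f x = 0"
      by eventually_elim (metis f_supp mult_eq_0_iff order_refl)
    then have "(\<integral>x. f x \<partial>lborel) = (\<integral>x. 0 \<partial>lborel)"
      using integral_cong_AE[of f lborel "\<lambda>_. (0::real)"] by simp
    then show False using f_prob by simp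
  qed
qed

end


lemma ennreal_cancel_aux:
  assumes "ennreal (2*c) \<le> I + ennreal c" "c \<ge> 0"
  shows "ennreal c \<le> I"
proof (cases I)
  case (real r)
  then have "ennreal (2*c) \<le> ennreal (r + c)" using assms by (simp add: ennreal_plus)
  then have "2*c \<le> r + c" using assms real by (subst (asm) ennreal_le_iff) auto
  then show ?thesis unfolding real by (intro ennreal_leI) simp
qed simp

theorem theorem1:
  fixes N :: nat and Pp :: "nat \<Rightarrow> real" and g :: "nat \<Rightarrow> nat \<Rightarrow> real"
    and f :: "real \<Rightarrow> real"
  assumes N_pos: "N \<ge> 1"
    and f_meas: "f \<in> borel_measurable borel"
    and f_nonneg: "\<And>x. f x \<ge> 0"
    and f_supp: "\<And>x. x \<le> 0 \<Longrightarrow> f x = 0"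
    and f_int: "integrable lborel f"
    and f_prob: "(\<integral>x. f x \<partial>lborel) = 1"
    and f_mean: "integrable lborel (\<lambda>x. x * f x)"
    and Pp_nonneg: "\<And>n. n \<in> {1..N} \<Longrightarrow> Pp n \<ge> 0"
    and Pp_sum: "(\<Sum>n\<in>{1..N}. Pp n) = 1"
    and g_nonneg: "\<And>n m. n \<in> {1..N} \<Longrightarrow> m \<in> {0..N} \<Longrightarrow> g m n \<ge> 0"
    and g_sum: "\<And>n. n \<in> {1..N} \<Longrightarrow> (\<Sum>m\<in>{0..N}. g m n) = 1"
  shows "expected_delay N Pp g f \<ge>
           (1 / (ennreal (\<integral>x. x * f x \<partial>lborel) * ennreal (\<Sum>n\<in>{1..N}. real n * Pp n)))
         * (\<Sum>n\<in>{1..N}. ennreal (real n) / ennreal (\<Sum>m\<in>{0..N}. real m * g m n)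
                          * ennreal (Pp n))"
proof -
  note fa = f_meas f_nonneg f_supp f_int f_prob f_mean
  define \<mu> where "\<mu> = (\<integral>x. x * f x \<partial>lborel)"
  define E where "E = (\<Sum>n\<in>{1..N}. real n * Pp n)"
  define gb where "gb n = (\<Sum>m\<in>{0..N}. real m * g m n)" for n
  define K2 where "K2 = (\<lambda>m. X_law f m \<bind> T_law)"
  define J where "J m = (\<integral>\<^sup>+ t. t \<partial>K2 m)" for m
  define K1 where "K1 = (\<lambda>n. Na_law N g n \<bind> K2)"
  define I where "I n = (\<integral>\<^sup>+ t. t \<partial>K1 n)" for n
  have mu_pos: "\<mu> > 0" unfolding \<mu>_def by (rule mu_pos[OF fa])
  have E_ge: "E \<ge> 1"
  proof -
    have "(\<Sum>n\<in>{1..N}. Pp n) \<le> E" unfolding E_def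
    proof (intro sum_mono)
      fix n assume "n \<in> {1..N}"
      then have "1 \<le> real n" "0 \<le> Pp n" by (auto simp: Pp_nonneg)
      then show "Pp n \<le> real n * Pp n" using mult_right_mono[of 1 "real n" "Pp n"] by simp
    qed
    then show ?thesis using Pp_sum by simp
  qed
  have sK2: "sets (K2 m) = sets borel" for m
    using K2_space[OF fa, of m] by (simp add: K2_def space_subprob_algebra)
  have K2_meas: "K2 \<in> measurable (Na_law N g n) (subprob_algebra borel)" for n
    by (rule meas_pow) (auto simp: Na_law_def space_point_measure sets_point_measure K2_def K2_space[OF fa])
  have I_eq: "I n = (\<Sum>m\<in>{0..N}. ennreal (g m n) * J m)" for n
    unfolding I_def K1_def J_def
    by (subst nn_integral_bind[OF _ K2_meas]) (auto simp: Na_law_def nn_integral_point_measure_finite)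
  have K1_meas: "K1 \<in> measurable (Np_law N Pp) (subprob_algebra borel)"
  proof (rule meas_pow)
    show "sets (Np_law N Pp) = Pow (space (Np_law N Pp))"
      by (simp add: Np_law_def space_point_measure sets_point_measure)
    fix n assume "n \<in> space (Np_law N Pp)"
    then have n: "n \<in> {1..N}" by (simp add: Np_law_def space_point_measure)
    have "prob_space (Na_law N g n)"
    proof (rule prob_spaceI)
      have "emeasure (Na_law N g n) (space (Na_law N g n)) = (\<Sum>m\<in>{0..N}. ennreal (g m n))"
        by (simp add: Na_law_def space_point_measure emeasure_point_measure_finite)
      also have "\<dots> = ennreal (\<Sum>m\<in>{0..N}. g m n)" using g_nonneg[OF n] by (intro sum_ennreal) auto
      also have "\<dots> = 1" using g_sum[OF n] by simp
      finally show "emeasure (Na_law N g n) (space (Na_law N g n)) = 1" .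
    qed
    then have "subprob_space (K1 n)" unfolding K1_def
      by (intro subprob_space_bind[OF _ K2_meas] prob_space_imp_subprob_space)
    moreover have "sets (K1 n) = sets borel" unfolding K1_def
      by (rule sets_bind) (auto simp: Na_law_def space_point_measure sK2)
    ultimately show "K1 n \<in> space (subprob_algebra borel)" by (simp add: space_subprob_algebra)
  qed
  have ED: "expected_delay N Pp g f = (\<Sum>n\<in>{1..N}. ennreal (real n * Pp n / E) * I n)"
    unfolding expected_delay_def delay_law_def K2_def[symmetric] K1_def[symmetric] I_def E_def
    by (subst nn_integral_bind[OF _ K1_meas]) (auto simp: Np_law_def nn_integral_point_measure_finite)
  have termb: "ennreal (1 / (\<mu> * E)) * (ennreal (real n) / ennreal (gb n) * ennreal (Pp n))
      \<le> ennreal (real n * Pp n / E) * I n" if n: "n \<in> {1..N}" for n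
  proof (cases "Pp n = 0")
    case True then show ?thesis by simp
  next
    case False
    then have Ppp: "Pp n > 0" using Pp_nonneg[OF n] by simp
    have gnn: "\<And>m. m \<in> {0..N} \<Longrightarrow> g m n \<ge> 0" using g_nonneg[OF n] .
    have gb_nn: "gb n \<ge> 0" unfolding gb_def by (intro sum_nonneg) (simp add: gnn)
    show ?thesis
    proof (cases "gb n = 0")
      case True
      have "\<forall>m\<in>{0..N}. real m * g m n = 0"
        using True unfolding gb_def by (subst sum_nonneg_eq_0_iff[symmetric]) (auto simp: gnn)
      then have z: "\<And>m. m \<in> {1..N} \<Longrightarrow> g m n = 0"
      proof -
        fix m assume m: "m \<in> {1..N}"
        then have "m \<in> {0..N}" "real m \<noteq> 0" by auto
        then have "real m * g m n = 0" using \<open>\<forall>m\<in>{0..N}. real m * g m n = 0\<close> by blast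
        then show "g m n = 0" using \<open>real m \<noteq> 0\<close> by simp
      qed
      have "(\<Sum>m\<in>{0..N}. g m n) = g 0 n + (\<Sum>m\<in>{1..N}. g m n)"
        by (simp add: sum.atLeast_Suc_atMost)
      then have g0: "g 0 n = 1" using g_sum[OF n] z by simp
      have "ennreal (g 0 n) * J 0 \<le> I n"
        unfolding I_eq by (rule member_le_sum) auto
      then have "I n = \<top>" using g0 J0[OF fa] by (simp add: J_def K2_def top_unique)
      moreover have "real n * Pp n / E > 0" using Ppp E_ge n by auto
      ultimately show ?thesis by (simp add: ennreal_mult_top)
    next
      case False
      then have gbp: "gb n > 0" using gb_nn by simp
      define a where "a = \<mu> * gb n"
      have ap: "a > 0" using gbp mu_pos by (simp add: a_def)
      have "ennreal (2 * (1/a)) = (\<Sum>m\<in>{0..N}. ennreal (g m n) * ennreal (2/a))"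
      proof -
        have "(\<Sum>m\<in>{0..N}. ennreal (g m n) * ennreal (2/a)) = (\<Sum>m\<in>{0..N}. ennreal (g m n * (2/a)))"
          using gnn ap by (intro sum.cong refl, subst ennreal_mult) auto
        also have "\<dots> = ennreal (\<Sum>m\<in>{0..N}. g m n * (2/a))"
          using gnn ap by (intro sum_ennreal) auto
        also have "(\<Sum>m\<in>{0..N}. g m n * (2/a)) = 2 * (1/a)"
          using g_sum[OF n] sum_distrib_right[of "\<lambda>m. g m n" "{0..N}" "2/a", symmetric] by simp
        finally show ?thesis by simp
      qed
      also have "\<dots> \<le> (\<Sum>m\<in>{0..N}. ennreal (g m n) * (J m + ennreal (real m * \<mu> / a^2)))"
        unfolding J_def K2_def \<mu>_def
        by (intro sum_mono mult_left_mono J_tangent[OF fa ap]) auto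
      also have "\<dots> = I n + (\<Sum>m\<in>{0..N}. ennreal (g m n * (real m * \<mu> / a^2)))"
      proof -
        have "(\<Sum>m\<in>{0..N}. ennreal (g m n) * (J m + ennreal (real m * \<mu> / a^2)))
          = I n + (\<Sum>m\<in>{0..N}. ennreal (g m n) * ennreal (real m * \<mu> / a^2))"
          unfolding I_eq by (simp only: distrib_left sum.distrib)
        also have "(\<Sum>m\<in>{0..N}. ennreal (g m n) * ennreal (real m * \<mu> / a^2))
           = (\<Sum>m\<in>{0..N}. ennreal (g m n * (real m * \<mu> / a^2)))"
          using gnn mu_pos by (intro sum.cong refl, subst ennreal_mult) auto
        finally show ?thesis .
      qed
      also have "(\<Sum>m\<in>{0..N}. ennreal (g m n * (real m * \<mu> / a^2))) = ennreal (1/a)"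
      proof -
        have "(\<Sum>m\<in>{0..N}. ennreal (g m n * (real m * \<mu> / a^2))) = ennreal (\<Sum>m\<in>{0..N}. g m n * (real m * \<mu> / a^2))"
          using gnn mu_pos by (intro sum_ennreal) auto
        also have "(\<Sum>m\<in>{0..N}. g m n * (real m * \<mu> / a^2)) = gb n * \<mu> / a^2"
          unfolding gb_def by (simp add: sum_distrib_left sum_distrib_right sum_divide_distrib mult_ac)
        also have "\<dots> = 1/a" using ap unfolding a_def by (simp add: power2_eq_square field_simps)
        finally show ?thesis .
      qed
      finally have Ib: "ennreal (1/a) \<le> I n"
        by (rule ennreal_cancel_aux) (use ap in simp)
      have "ennreal (1 / (\<mu> * E)) * (ennreal (real n) / ennreal (gb n) * ennreal (Pp n))
          = ennreal (real n * Pp n / E) * ennreal (1/a)"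
        using gbp mu_pos E_ge Ppp
        by (simp add: divide_ennreal ennreal_mult'[symmetric] a_def field_simps)
      also have "\<dots> \<le> ennreal (real n * Pp n / E) * I n"
        by (intro mult_left_mono Ib) auto
      finally show ?thesis .
    qed
  qed
  have lhs: "(1 / (ennreal \<mu> * ennreal E)) = ennreal (1 / (\<mu> * E))"
    using mu_pos E_ge by (simp add: ennreal_mult'[symmetric] divide_ennreal[symmetric])
  show ?thesis
    unfolding ED \<mu>_def[symmetric] E_def[symmetric] gb_def[symmetric] lhs sum_distrib_left
    by (intro sum_mono termb)
qed


end
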